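(* Let $\mathcal{B}\subseteq\mathcal{C}^n$. Then for every $k\in\mathbb{N}$, every $R\in\mathbb{R}^{n\times k}$ and every $f\in\mathbb{R}^n\setminus\mathbb{Z}^n$, one has $C_{\mathcal{B}}(R,f)=C_{\operatorname{cl}_f(\mathcal{B}_f)}(R,f)$.
   Context: $\mathcal{C}^n$ is the family of all $n$-dimensional closed convex subsets of $\mathbb{R}^n$; $\mathcal{C}^n_f$ is the subfamily containing $f$ in the interior, and $\mathcal{B}_f=\mathcal{B}\cap\mathcal{C}^n_f$. For $B\in\mathcal{C}^n$ with $0\in\operatorname{int}(B)$, $\psi_B(r)=\inf\{\lambda>0:r\in\lambda B\}$. For $R=(r_1,\dots,r_k)$ and $B\in\mathcal{C}^n$: if $f\in\operatorname{int}(B)$, $C_B(R,f)=\{s\in\mathbb{R}^k_{\ge0}:\sum_j s_j\psi_{B-f}(r_j)\ge1\}$, otherwise $C_B(R,f)=\mathbb{R}^k_{\ge0}$; $C_{\mathcal{B}}(R,f)=\bigcap_{B\in\mathcal{B}}C_B(R,f)$ ($=\mathbb{R}^k_{\ge0}$ if the family is empty). The polar of $X$ is $X^\circ=\{r:r\cdot x\le1\ \forall x\in X\}$; the $f$-metric on $\mathcal{C}^n_f$ is $d_f(B_1,B_2)=d_H((B_1-f)^\circ,(B_2-f)^\circ)$ with $d_H$ the Hausdorff metric; $\operatorname{cl}_f(\mathcal{A})$ denotes the closure of $\mathcal{A}\subseteq\mathcal{C}^n_f$ in $\mathcal{C}^n_f$ with respect to $d_f$. *)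

theory Defs
  imports "HOL-Analysis.Analysis"
begin

definition convex_bodies :: "('a::euclidean_space) set set" where
  "convex_bodies = {B. closed B \<and> convex B \<and> aff_dim B = int DIM('a)}"

definition convex_bodies_at :: "'a::euclidean_space \<Rightarrow> 'a set set" where
  "convex_bodies_at f = {B \<in> convex_bodies. f \<in> interior B}"

definition gauge_fn :: "'a::euclidean_space set \<Rightarrow> 'a \<Rightarrow> real" where
  "gauge_fn B r = Inf {t. t > 0 \<and> r \<in> (\<lambda>x. t *\<^sub>R x) ` B}"

definition polar :: "'a::euclidean_space set \<Rightarrow> 'a set" where
  "polar X = {r. \<forall>x\<in>X. inner r x \<le> 1}"

text \<open>Hausdorff distance (used on nonempty compact sets).\<close>
definition hausdorff_dist :: "'a::euclidean_space set \<Rightarrow> 'a set \<Rightarrow> real" where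
  "hausdorff_dist A B = max (SUP a\<in>A. infdist a B) (SUP b\<in>B. infdist b A)"

definition f_metric :: "'a::euclidean_space \<Rightarrow> 'a set \<Rightarrow> 'a set \<Rightarrow> real" where
  "f_metric f B1 B2 = hausdorff_dist (polar ((\<lambda>x. x - f) ` B1)) (polar ((\<lambda>x. x - f) ` B2))"

definition cl_f :: "'a::euclidean_space \<Rightarrow> 'a set set \<Rightarrow> 'a set set" where
  "cl_f f A = {B \<in> convex_bodies_at f. \<forall>\<epsilon>>0. \<exists>A'\<in>A. f_metric f B A' < \<epsilon>}"

text \<open>C_B(R,f) for a single convex set B; R = (r_1,...,r_k) is a list of k vectors,
  points s of R^k are lists of length k.\<close>
definition C_set :: "'a::euclidean_space set \<Rightarrow> 'a list \<Rightarrow> 'a \<Rightarrow> real list set" where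
  "C_set B R f =
     (if f \<in> interior B
      then {s. length s = length R \<and> (\<forall>j<length s. s ! j \<ge> 0) \<and>
               (\<Sum>j<length R. s ! j * gauge_fn ((\<lambda>x. x - f) ` B) (R ! j)) \<ge> 1}
      else {s. length s = length R \<and> (\<forall>j<length s. s ! j \<ge> 0)})"

definition C_family :: "'a::euclidean_space set set \<Rightarrow> 'a list \<Rightarrow> 'a \<Rightarrow> real list set" where
  "C_family \<B> R f =
     {s. length s = length R \<and> (\<forall>j<length s. s ! j \<ge> 0)} \<inter> (\<Inter>B\<in>\<B>. C_set B R f)"

end

theory Submission
  imports Defs
begin

lemma infdist_lt_ex:
  fixes A :: "'a::metric_space set"
  assumes "A \<noteq> {}" "infdist y A < e"
  shows "\<exists>z\<in>A. dist y z < e"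
proof -
  have "(INF a\<in>A. dist y a) < e" using assms(2) unfolding infdist_notempty[OF assms(1)] .
  moreover have "bdd_below ((\<lambda>a. dist y a) ` A)" by (rule bdd_belowI[of _ 0]) auto
  ultimately show ?thesis using cINF_less_iff[OF assms(1), of "\<lambda>a. dist y a" e] by blast
qed

lemma polar_bound:
  fixes K :: "'a::euclidean_space set"
  assumes "d > 0" "ball 0 d \<subseteq> K" "y \<in> polar K"
  shows "norm y \<le> 2 / d"
proof (cases "y = 0")
  case True then show ?thesis using assms by simp
next
  case False
  let ?x = "((d/2) / norm y) *\<^sub>R y"
  have "norm ?x = d/2" using False assms by simp
  then have "?x \<in> K" using assms by auto
  then have "inner y ?x \<le> 1" using assms(3) unfolding polar_def by auto
  moreover have "inner y ?x = (d/2) * norm y"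
  proof -
    have "inner y ?x = ((d/2) / norm y) * inner y y" by simp
    also have "inner y y = norm y * norm y" by (simp add: dot_square_norm power2_eq_square)
    finally show ?thesis using False by simp
  qed
  ultimately have "(d/2) * norm y \<le> 1" by linarith
  then show ?thesis using assms(1) by (simp add: field_simps)
qed

lemma gauge_set_ne:
  fixes K :: "'a::euclidean_space set"
  assumes "d > 0" "ball 0 d \<subseteq> K"
  shows "\<exists>t>0. r \<in> (\<lambda>x. t *\<^sub>R x) ` K"
proof -
  define t where "t = 2 * norm r / d + 1"
  have "2 * norm r / d \<ge> 0" using assms by simp
  then have tp: "t > 0" unfolding t_def by linarith
  have "norm ((1/t) *\<^sub>R r) = norm r / t" using tp by simp
  also have "\<dots> < d"
  proof -
    have "d * t = 2 * norm r + d" unfolding t_def using assms(1) by (simp add: field_simps)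
    then have "norm r < d * t" using assms(1) norm_ge_zero[of r] by linarith
    then show ?thesis using tp by (simp add: field_simps)
  qed
  finally have "(1/t) *\<^sub>R r \<in> K" using assms by auto
  moreover have "r = t *\<^sub>R ((1/t) *\<^sub>R r)" using tp by simp
  ultimately show ?thesis using tp by blast
qed

lemma gauge_upper:
  fixes K :: "'a::euclidean_space set"
  assumes "d > 0" "ball 0 d \<subseteq> K" "z \<in> polar K"
  shows "inner r z \<le> gauge_fn K r"
  unfolding gauge_fn_def
proof (rule cInf_greatest)
  show "{t. t > 0 \<and> r \<in> (\<lambda>x. t *\<^sub>R x) ` K} \<noteq> {}" using gauge_set_ne[OF assms(1,2)] by auto
next
  fix t assume "t \<in> {t. t > 0 \<and> r \<in> (\<lambda>x. t *\<^sub>R x) ` K}"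
  then obtain x where t: "t > 0" "x \<in> K" "r = t *\<^sub>R x" by auto
  then have "inner z x \<le> 1" using assms(3) unfolding polar_def by auto
  then show "inner r z \<le> t" using t by (simp add: inner_commute mult_left_le)
qed

lemma gauge_lower:
  fixes K :: "'a::euclidean_space set"
  assumes "d > 0" "ball 0 d \<subseteq> K" "closed K" "convex K" "\<eta> > 0"
  shows "\<exists>y\<in>polar K. gauge_fn K r - \<eta> \<le> inner r y"
proof (cases "gauge_fn K r - \<eta> \<le> 0")
  case True
  have "0 \<in> polar K" unfolding polar_def by simp
  then show ?thesis using True by (intro bexI[of _ 0]) auto
next
  case False
  define t where "t = gauge_fn K r - \<eta>"
  have tp: "t > 0" using False t_def by simp
  have bdd: "bdd_below {t. t > 0 \<and> r \<in> (\<lambda>x. t *\<^sub>R x) ` K}" by (rule bdd_belowI[of _ 0]) auto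
  have "(1/t) *\<^sub>R r \<notin> K"
  proof
    assume "(1/t) *\<^sub>R r \<in> K"
    moreover have "r = t *\<^sub>R ((1/t) *\<^sub>R r)" using tp by simp
    ultimately have "t \<in> {t. t > 0 \<and> r \<in> (\<lambda>x. t *\<^sub>R x) ` K}" using tp by blast
    then have "gauge_fn K r \<le> t" unfolding gauge_fn_def using bdd by (rule cInf_lower)
    then show False using t_def assms(5) by simp
  qed
  then obtain a b where ab: "inner a ((1/t) *\<^sub>R r) < b" "\<forall>x\<in>K. inner a x > b"
    using separating_hyperplane_closed_point[OF assms(4,3)] by blast
  have "0 \<in> K" using assms(1,2) by auto
  then have bn: "b < 0" using ab(2) by force
  define y where "y = (1/b) *\<^sub>R a"
  have "y \<in> polar K" unfolding polar_def y_def
  proof safe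
    fix x assume "x \<in> K"
    then have "inner a x > b" using ab by auto
    then show "inner ((1/b) *\<^sub>R a) x \<le> 1" using bn by (simp add: field_simps)
  qed
  moreover have "inner r y > t"
  proof -
    have "inner a r / t < b" using ab(1) by (simp add: inner_commute)
    then have "inner a r < b * t" using tp by (simp add: field_simps)
    then have "inner a r / b > t" using bn by (simp add: field_simps)
    then show ?thesis unfolding y_def by (simp add: inner_commute)
  qed
  ultimately show ?thesis unfolding t_def by (intro bexI[of _ y]) auto
qed

lemma trans_ball:
  fixes B :: "'a::euclidean_space set"
  assumes "f \<in> interior B"
  shows "\<exists>d>0. ball 0 d \<subseteq> (\<lambda>x. x - f) ` B"
proof -
  obtain d where d: "d > 0" "ball f d \<subseteq> B" using assms mem_interior by blast
  have "ball 0 d \<subseteq> (\<lambda>x. x - f) ` B"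
  proof
    fix x :: 'a assume "x \<in> ball 0 d"
    then have "x + f \<in> B" using d by (auto simp: dist_norm)
    then show "x \<in> (\<lambda>x. x - f) ` B" by (intro image_eqI[of _ _ "x+f"]) auto
  qed
  then show ?thesis using d by blast
qed

lemma key_ineq:
  fixes B A :: "'a::euclidean_space set"
  assumes B: "B \<in> convex_bodies_at f" and A: "A \<in> convex_bodies_at f"
    and fm: "f_metric f B A < e" and e: "e > 0"
  shows "gauge_fn ((\<lambda>x. x - f) ` A) r \<le> gauge_fn ((\<lambda>x. x - f) ` B) r + e * (norm r + 1)"
proof -
  define KA where "KA = (\<lambda>x. x - f) ` A"
  define KB where "KB = (\<lambda>x. x - f) ` B"
  obtain dA where dA: "dA > 0" "ball 0 dA \<subseteq> KA"
    using trans_ball[of f A] A unfolding convex_bodies_at_def KA_def by auto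
  obtain dB where dB: "dB > 0" "ball 0 dB \<subseteq> KB"
    using trans_ball[of f B] B unfolding convex_bodies_at_def KB_def by auto
  have cA: "closed KA" "convex KA" using A unfolding KA_def convex_bodies_at_def convex_bodies_def
    by (auto intro: closed_translation_subtract)
  obtain y where y: "y \<in> polar KA" "gauge_fn KA r - e \<le> inner r y"
    using gauge_lower[OF dA cA e] by blast
  have bdd: "bdd_above ((\<lambda>b. infdist b (polar KB)) ` polar KA)"
  proof (rule bdd_aboveI[of _ "2/dA"])
    fix x assume "x \<in> (\<lambda>b. infdist b (polar KB)) ` polar KA"
    then obtain b where b: "b \<in> polar KA" "x = infdist b (polar KB)" by auto
    have "0 \<in> polar KB" unfolding polar_def by simp
    then have "x \<le> dist b 0" using b infdist_le by metis
    then show "x \<le> 2/dA" using polar_bound[OF dA b(1)] by simp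
  qed
  have "infdist y (polar KB) \<le> (SUP b\<in>polar KA. infdist b (polar KB))"
    using cSUP_upper[OF y(1) bdd] .
  also have "\<dots> \<le> f_metric f B A" unfolding f_metric_def hausdorff_dist_def KA_def KB_def by simp
  finally have "infdist y (polar KB) < e" using fm by simp
  moreover have "0 \<in> polar KB" unfolding polar_def by simp
  then have "polar KB \<noteq> {}" by blast
  ultimately obtain z where z: "z \<in> polar KB" "dist y z < e" using infdist_lt_ex by blast
  have "inner r y - inner r z = inner r (y - z)" by (simp add: inner_diff_right)
  also have "\<dots> \<le> norm r * norm (y - z)" using norm_cauchy_schwarz by blast
  also have "\<dots> \<le> norm r * e" using z(2) by (simp add: dist_norm mult_left_mono)
  finally have "inner r y \<le> inner r z + norm r * e" by simp
  moreover have "inner r z \<le> gauge_fn KB r" using gauge_upper[OF dB z(1)] .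
  ultimately show ?thesis using y(2) unfolding KA_def[symmetric] KB_def[symmetric]
    by (simp add: algebra_simps)
qed

lemma eps_arg:
  fixes a S :: real
  assumes "S \<ge> 0" "\<And>e. e > 0 \<Longrightarrow> 1 \<le> a + e * S"
  shows "1 \<le> a"
proof (rule ccontr)
  assume "\<not> 1 \<le> a"
  define e where "e = (1 - a) / (2 * (S + 1))"
  have ep: "e > 0" using \<open>\<not> 1 \<le> a\<close> assms(1) unfolding e_def by simp
  have "e * S < 1 - a"
  proof -
    have "e * S \<le> e * (S + 1)" using ep by simp
    also have "\<dots> = (1 - a)/2" unfolding e_def using assms(1) by (simp add: field_simps)
    finally show ?thesis using \<open>\<not> 1 \<le> a\<close> by simp
  qed
  moreover have "1 \<le> a + e * S" using assms(2)[OF ep] .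
  ultimately show False by linarith
qed

theorem proposition3p8:
  fixes \<B> :: "(real^'n) set set" and R :: "(real^'n) list" and f :: "real^'n"
  assumes "\<B> \<subseteq> convex_bodies"
    and "\<exists>i. f $ i \<notin> \<int>"
  shows "C_family \<B> R f = C_family (cl_f f (\<B> \<inter> convex_bodies_at f)) R f"
proof
  let ?N = "{s. length s = length R \<and> (\<forall>j<length s. s ! j \<ge> 0)}"
  let ?g = "\<lambda>B r. gauge_fn ((\<lambda>x. x - f) ` B) r"
  show "C_family \<B> R f \<subseteq> C_family (cl_f f (\<B> \<inter> convex_bodies_at f)) R f"
  proof
    fix s assume s: "s \<in> C_family \<B> R f"
    then have sN: "s \<in> ?N" unfolding C_family_def by auto
    have hyp: "\<And>A. A \<in> \<B> \<Longrightarrow> f \<in> interior A \<Longrightarrow> 1 \<le> (\<Sum>j<length R. s ! j * ?g A (R ! j))"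
    proof -
      fix A assume A: "A \<in> \<B>" "f \<in> interior A"
      have "s \<in> C_set A R f" using s A(1) unfolding C_family_def by blast
      then show "1 \<le> (\<Sum>j<length R. s ! j * ?g A (R ! j))"
        using A(2) unfolding C_set_def by simp
    qed
    have "s \<in> C_set B R f" if B: "B \<in> cl_f f (\<B> \<inter> convex_bodies_at f)" for B
    proof -
      have Bc: "B \<in> convex_bodies_at f" using B unfolding cl_f_def by auto
      then have fi: "f \<in> interior B" unfolding convex_bodies_at_def by auto
      define S where "S = (\<Sum>j<length R. s ! j * (norm (R ! j) + 1))"
      have S0: "S \<ge> 0" unfolding S_def using sN by (intro sum_nonneg) auto
      have "1 \<le> (\<Sum>j<length R. s ! j * ?g B (R ! j))"
      proof (rule eps_arg[OF S0])
        fix e :: real assume e: "e > 0"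
        obtain A where A: "A \<in> \<B> \<inter> convex_bodies_at f" "f_metric f B A < e"
          using B e unfolding cl_f_def by blast
        have fA: "f \<in> interior A" using A unfolding convex_bodies_at_def by auto
        have "1 \<le> (\<Sum>j<length R. s ! j * ?g A (R ! j))" using hyp A fA by auto
        also have "\<dots> \<le> (\<Sum>j<length R. s ! j * (?g B (R ! j) + e * (norm (R ! j) + 1)))"
        proof (rule sum_mono)
          fix j assume "j \<in> {..<length R}"
          then have "s ! j \<ge> 0" using sN by auto
          then show "s ! j * ?g A (R ! j) \<le> s ! j * (?g B (R ! j) + e * (norm (R ! j) + 1))"
            using key_ineq[OF Bc _ A(2) e, of "R ! j"] A(1) by (intro mult_left_mono) auto
        qed
        also have "\<dots> = (\<Sum>j<length R. s ! j * ?g B (R ! j)) + e * S"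
          unfolding S_def by (simp add: sum.distrib sum_distrib_left algebra_simps)
        finally show "1 \<le> (\<Sum>j<length R. s ! j * ?g B (R ! j)) + e * S" .
      qed
      then show ?thesis using sN fi unfolding C_set_def by auto
    qed
    then show "s \<in> C_family (cl_f f (\<B> \<inter> convex_bodies_at f)) R f"
      using sN unfolding C_family_def by auto
  qed
next
  show "C_family (cl_f f (\<B> \<inter> convex_bodies_at f)) R f \<subseteq> C_family \<B> R f"
  proof
    fix s assume s: "s \<in> C_family (cl_f f (\<B> \<inter> convex_bodies_at f)) R f"
    have sub: "\<B> \<inter> convex_bodies_at f \<subseteq> cl_f f (\<B> \<inter> convex_bodies_at f)"
    proof
      fix B assume B: "B \<in> \<B> \<inter> convex_bodies_at f"
      have "f_metric f B B = 0"
      proof -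
        define P where "P = polar ((\<lambda>x. x - f) ` B)"
        have "0 \<in> P" unfolding P_def polar_def by simp
        then have "P \<noteq> {}" by blast
        then have "(SUP a\<in>P. infdist a P) = 0" by simp
        then show ?thesis unfolding f_metric_def hausdorff_dist_def P_def by simp
      qed
      then show "B \<in> cl_f f (\<B> \<inter> convex_bodies_at f)" using B unfolding cl_f_def
        by (intro CollectI conjI allI impI bexI[of _ B]) auto
    qed
    have "s \<in> C_set B R f" if "B \<in> \<B>" for B
    proof (cases "f \<in> interior B")
      case True
      then have "B \<in> \<B> \<inter> convex_bodies_at f" using that assms(1)
        unfolding convex_bodies_at_def by auto
      then show ?thesis using s sub unfolding C_family_def by auto
    next
      case False
      then show ?thesis using s unfolding C_family_def C_set_def by auto
    qed
    then show "s \<in> C_family \<B> R f" using s unfolding C_family_def by auto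
  qed
qed

end
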